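(* Let $n\ge1$ and let $\mathscr{Q}$ be the set of all subsets of the Hamming cube $\{0,1\}^n\subset\ell_1^{(n)}$ (with the $\ell_1$ metric) that have strict $1$-negative type. Then there exists $q>1$ such that $\mathfrak{q}(S)\ge q$ for all $S\in\mathscr{Q}$.
   Context: For $p\ge0$, a metric space $(X,d)$ has $p$-negative type if for all finite $\{x_1,\ldots,x_m\}\subseteq X$ ($m\ge2$) and all reals $\eta_1,\ldots,\eta_m$ with $\sum\eta_i=0$, $\sum_{i,j}d(x_i,x_j)^p\eta_i\eta_j\le 0$; it has strict $p$-negative type if moreover this inequality is strict whenever $(\eta_1,\ldots,\eta_m)\ne0$. $p$ is a generalized roundness exponent if for all $m$ and all $a_1,\ldots,a_m,b_1,\ldots,b_m\in X$, $\sum_{k<l}\{d(a_k,a_l)^p+d(b_k,b_l)^p\}\le\sum_{j,i}d(a_j,b_i)^p$; the generalized roundness $\mathfrak{q}(X)$ is the supremum of all generalized roundness exponents. *)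

theory Defs
  imports Complex_Main "HOL-Library.Extended_Real"
begin

definition p_negative_type :: "'a set \<Rightarrow> ('a \<Rightarrow> 'a \<Rightarrow> real) \<Rightarrow> real \<Rightarrow> bool" where
  "p_negative_type X d p \<longleftrightarrow>
     (\<forall>m::nat. \<forall>x::nat \<Rightarrow> 'a. \<forall>\<eta>::nat \<Rightarrow> real.
        m \<ge> 2 \<and> inj_on x {..<m} \<and> x ` {..<m} \<subseteq> X \<and> (\<Sum>i<m. \<eta> i) = 0 \<longrightarrow>
        (\<Sum>i<m. \<Sum>j<m. d (x i) (x j) powr p * \<eta> i * \<eta> j) \<le> 0)"

definition strict_p_negative_type :: "'a set \<Rightarrow> ('a \<Rightarrow> 'a \<Rightarrow> real) \<Rightarrow> real \<Rightarrow> bool" where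
  "strict_p_negative_type X d p \<longleftrightarrow> p_negative_type X d p \<and>
     (\<forall>m::nat. \<forall>x::nat \<Rightarrow> 'a. \<forall>\<eta>::nat \<Rightarrow> real.
        m \<ge> 2 \<and> inj_on x {..<m} \<and> x ` {..<m} \<subseteq> X \<and> (\<Sum>i<m. \<eta> i) = 0
        \<and> (\<exists>i<m. \<eta> i \<noteq> 0) \<longrightarrow>
        (\<Sum>i<m. \<Sum>j<m. d (x i) (x j) powr p * \<eta> i * \<eta> j) < 0)"

definition gen_roundness_exponent :: "'a set \<Rightarrow> ('a \<Rightarrow> 'a \<Rightarrow> real) \<Rightarrow> real \<Rightarrow> bool" where
  "gen_roundness_exponent X d p \<longleftrightarrow>
     (\<forall>m::nat. \<forall>a b :: nat \<Rightarrow> 'a.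
        a ` {..<m} \<subseteq> X \<and> b ` {..<m} \<subseteq> X \<longrightarrow>
        (\<Sum>k<m. \<Sum>l<m. if k < l then d (a k) (a l) powr p + d (b k) (b l) powr p else 0)
          \<le> (\<Sum>j<m. \<Sum>i<m. d (a j) (b i) powr p))"

definition gen_roundness :: "'a set \<Rightarrow> ('a \<Rightarrow> 'a \<Rightarrow> real) \<Rightarrow> ereal" where
  "gen_roundness X d = (SUP p \<in> {p. p \<ge> 0 \<and> gen_roundness_exponent X d p}. ereal p)"

text \<open>The Hamming cube {0,1}^n with the l1 metric; coordinates are indexed by a finite type 'n,
  n = CARD('n) \<ge> 1.\<close>
definition hamming_dist :: "('n::finite \<Rightarrow> bool) \<Rightarrow> ('n \<Rightarrow> bool) \<Rightarrow> real" where
  "hamming_dist x y = (\<Sum>i\<in>UNIV. \<bar>(if x i then 1 else 0) - (if y i then 1 else 0)\<bar>)"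

end

theory Submission
  imports Defs "HOL-Analysis.Analysis"
begin

lemma strict_sum:
  fixes S :: "'a set" and v :: "'a \<Rightarrow> real"
  assumes sn: "strict_p_negative_type S D p" and fin: "finite S"
    and s0: "(\<Sum>x\<in>S. v x) = 0" and nz: "\<exists>x\<in>S. v x \<noteq> 0"
  shows "(\<Sum>x\<in>S. \<Sum>y\<in>S. D x y powr p * v x * v y) < 0"
proof -
  obtain e where e: "bij_betw e {..<card S} S"
    using ex_bij_betw_nat_finite[OF fin] atLeast0LessThan by metis
  obtain x0 where x0: "x0 \<in> S" "v x0 \<noteq> 0" using nz by blast
  have m2: "card S \<ge> 2"
  proof (rule ccontr)
    assume "\<not> ?thesis"
    then have "card S \<le> Suc 0" by simp
    then have "\<forall>a1\<in>S. \<forall>a2\<in>S. a1 = a2" using card_le_Suc0_iff_eq[OF fin] by blast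
    then have "S = {x0}" using x0 by blast
    then show False using s0 x0 by simp
  qed
  have inj: "inj_on e {..<card S}" "e ` {..<card S} \<subseteq> S"
    using e unfolding bij_betw_def by auto
  have sum1: "(\<Sum>i<card S. v (e i)) = 0" using sum.reindex_bij_betw[OF e, of v] s0 by simp
  have "x0 \<in> e ` {..<card S}" using e x0 unfolding bij_betw_def by auto
  then have nz': "\<exists>i<card S. v (e i) \<noteq> 0" using x0 by auto
  have "(\<Sum>i<card S. \<Sum>j<card S. D (e i) (e j) powr p * v (e i) * v (e j)) < 0"
    using sn m2 inj sum1 nz' unfolding strict_p_negative_type_def by blast
  moreover have "(\<Sum>i<card S. \<Sum>j<card S. D (e i) (e j) powr p * v (e i) * v (e j))
      = (\<Sum>x\<in>S. \<Sum>y\<in>S. D x y powr p * v x * v y)"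
  proof -
    have "(\<Sum>j<card S. D (e i) (e j) powr p * v (e i) * v (e j))
        = (\<Sum>y\<in>S. D (e i) y powr p * v (e i) * v y)" for i
      using sum.reindex_bij_betw[OF e, of "\<lambda>y. D (e i) y powr p * v (e i) * v y"] by simp
    then have "(\<Sum>i<card S. \<Sum>j<card S. D (e i) (e j) powr p * v (e i) * v (e j))
        = (\<Sum>i<card S. \<Sum>y\<in>S. D (e i) y powr p * v (e i) * v y)" by simp
    also have "\<dots> = (\<Sum>x\<in>S. \<Sum>y\<in>S. D x y powr p * v x * v y)"
      using sum.reindex_bij_betw[OF e, of "\<lambda>x. \<Sum>y\<in>S. D x y powr p * v x * v y"] by blast
    finally show ?thesis .
  qed
  ultimately show ?thesis by simp
qed

lemma unif_neg:
  fixes S :: "'a::finite set" and D :: "'a \<Rightarrow> 'a \<Rightarrow> real"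
  assumes neg: "\<And>v. (\<Sum>x\<in>S. v x) = 0 \<Longrightarrow> (\<exists>x\<in>S. v x \<noteq> 0) \<Longrightarrow>
      (\<Sum>x\<in>S. \<Sum>y\<in>S. D x y * v x * v y) < 0"
  shows "\<exists>c>0. \<forall>v. (\<Sum>x\<in>S. v x) = 0 \<and> (\<Sum>x\<in>S. \<bar>v x\<bar>) = 1 \<longrightarrow>
      (\<Sum>x\<in>S. \<Sum>y\<in>S. D x y * v x * v y) \<le> -c"
proof -
  define K where "K = {w::real^'a. (\<Sum>x\<in>-S. \<bar>w$x\<bar>) = 0 \<and> (\<Sum>x\<in>S. w$x) = 0 \<and> (\<Sum>x\<in>S. \<bar>w$x\<bar>) = 1}"
  define f where "f = (\<lambda>w::real^'a. \<Sum>x\<in>S. \<Sum>y\<in>S. D x y * w$x * w$y)"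
  have inK: "(\<chi> x. if x \<in> S then v x else 0) \<in> K"
    if "(\<Sum>x\<in>S. v x) = 0" "(\<Sum>x\<in>S. \<bar>v x\<bar>) = 1" for v
    using that unfolding K_def by auto
  have fK: "f (\<chi> x. if x \<in> S then v x else 0) = (\<Sum>x\<in>S. \<Sum>y\<in>S. D x y * v x * v y)" for v
    unfolding f_def by (intro sum.cong refl) auto
  show ?thesis
  proof (cases "K = {}")
    case True
    then show ?thesis using inK by (intro exI[of _ 1]) auto
  next
    case False
    have cl: "closed K" unfolding K_def
      by (intro closed_Collect_conj closed_Collect_eq continuous_intros)
    have bd: "bounded K" unfolding bounded_iff
    proof (intro exI ballI)
      fix w assume w: "w \<in> K"
      have "norm w \<le> (\<Sum>x\<in>UNIV. \<bar>w$x\<bar>)" by (rule norm_le_l1_cart)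
      also have "\<dots> = (\<Sum>x\<in>S. \<bar>w$x\<bar>) + (\<Sum>x\<in>-S. \<bar>w$x\<bar>)"
        using sum.union_disjoint[of S "-S" "\<lambda>x. \<bar>w$x\<bar>"] by (simp add: Compl_partition)
      also have "\<dots> = 1" using w unfolding K_def by simp
      finally show "norm w \<le> 1" .
    qed
    have cK: "compact K" using cl bd by (simp add: compact_eq_bounded_closed)
    have cf: "continuous_on K f" unfolding f_def by (intro continuous_intros)
    obtain w0 where w0: "w0 \<in> K" "\<forall>w\<in>K. f w \<le> f w0"
      using continuous_attains_sup[OF cK False cf] by blast
    have "\<exists>x\<in>S. w0$x \<noteq> 0"
    proof (rule ccontr)
      assume "\<not> ?thesis"
      then have "(\<Sum>x\<in>S. \<bar>w0$x\<bar>) = 0" by simp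
      then show False using w0 unfolding K_def by simp
    qed
    then have "f w0 < 0" using neg[of "\<lambda>x. w0$x"] w0 unfolding K_def f_def by simp
    then show ?thesis
      using w0 inK fK by (intro exI[of _ "- f w0"]) fastforce
  qed
qed

lemma choose_p:
  fixes S :: "'a set" and D :: "'a \<Rightarrow> 'a \<Rightarrow> real"
  assumes fin: "finite S" and nn: "\<And>x y. D x y \<ge> 0" and c: "c > 0"
  shows "\<exists>p>1. (\<Sum>x\<in>S. \<Sum>y\<in>S. \<bar>D x y powr p - D x y\<bar>) < c"
proof -
  have t: "((\<lambda>p. \<bar>D x y powr p - D x y\<bar>) \<longlongrightarrow> 0) (at_right 1)" for x y
  proof (cases "D x y = 0")
    case True then show ?thesis by simp
  next
    case False
    have "((\<lambda>p. D x y powr p) \<longlongrightarrow> D x y powr 1) (at_right 1)"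
      using False by (intro tendsto_intros) auto
    then have "((\<lambda>p. D x y powr p) \<longlongrightarrow> D x y) (at_right 1)" using nn[of x y] by (simp add: powr_one)
    then have "((\<lambda>p. \<bar>D x y powr p - D x y\<bar>) \<longlongrightarrow> \<bar>D x y - D x y\<bar>) (at_right 1)"
      by (intro tendsto_intros)
    then show ?thesis by simp
  qed
  have "((\<lambda>p. \<Sum>x\<in>S. \<Sum>y\<in>S. \<bar>D x y powr p - D x y\<bar>) \<longlongrightarrow> (\<Sum>x\<in>S. \<Sum>y\<in>S. 0)) (at_right 1)"
    by (intro tendsto_sum t)
  then have "eventually (\<lambda>p. (\<Sum>x\<in>S. \<Sum>y\<in>S. \<bar>D x y powr p - D x y\<bar>) < c) (at_right (1::real))"
    using c by (intro order_tendstoD(2)) auto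
  then obtain b where b: "b > 1" "\<forall>y>1. y < b \<longrightarrow> (\<Sum>x\<in>S. \<Sum>z\<in>S. \<bar>D x z powr y - D x z\<bar>) < c"
    unfolding eventually_at_right_field by blast
  show ?thesis using b by (intro exI[of _ "(1+b)/2"]) auto
qed

lemma neg_p:
  fixes S :: "'a set" and D :: "'a \<Rightarrow> 'a \<Rightarrow> real"
  assumes fin: "finite S"
    and bound: "\<forall>v. (\<Sum>x\<in>S. v x) = 0 \<and> (\<Sum>x\<in>S. \<bar>v x\<bar>) = 1 \<longrightarrow>
      (\<Sum>x\<in>S. \<Sum>y\<in>S. D x y * v x * v y) \<le> -c"
    and pc: "(\<Sum>x\<in>S. \<Sum>y\<in>S. \<bar>D x y powr p - D x y\<bar>) < c"
    and s0: "(\<Sum>x\<in>S. v x) = 0"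
  shows "(\<Sum>x\<in>S. \<Sum>y\<in>S. D x y powr p * v x * v y) \<le> 0"
proof (cases "(\<Sum>x\<in>S. \<bar>v x\<bar>) = 0")
  case True
  then have "\<forall>x\<in>S. v x = 0" using sum_nonneg_eq_0_iff[OF fin, of "\<lambda>x. \<bar>v x\<bar>"] by simp
  then show ?thesis by simp
next
  case False
  define s where "s = (\<Sum>x\<in>S. \<bar>v x\<bar>)"
  have sp: "s > 0" using False unfolding s_def by (simp add: order_le_neq_trans sum_nonneg)
  define w where "w x = v x / s" for x
  have w0: "(\<Sum>x\<in>S. w x) = 0" unfolding w_def using s0 by (simp add: sum_divide_distrib[symmetric])
  have w1: "(\<Sum>x\<in>S. \<bar>w x\<bar>) = 1" unfolding w_def using sp
    by (simp add: sum_divide_distrib[symmetric] s_def)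
  have wle: "\<bar>w x\<bar> \<le> 1" if "x \<in> S" for x
    using member_le_sum[of x S "\<lambda>x. \<bar>w x\<bar>"] that fin w1 by simp
  have q1: "(\<Sum>x\<in>S. \<Sum>y\<in>S. D x y * w x * w y) \<le> -c" using bound w0 w1 by blast
  have "(\<Sum>x\<in>S. \<Sum>y\<in>S. (D x y powr p - D x y) * w x * w y) \<le> (\<Sum>x\<in>S. \<Sum>y\<in>S. \<bar>D x y powr p - D x y\<bar>)"
  proof (intro sum_mono)
    fix x y assume xy: "x \<in> S" "y \<in> S"
    have "\<bar>(D x y powr p - D x y) * w x * w y\<bar> = \<bar>D x y powr p - D x y\<bar> * (\<bar>w x\<bar> * \<bar>w y\<bar>)"
      by (simp add: abs_mult)
    also have "\<dots> \<le> \<bar>D x y powr p - D x y\<bar> * 1"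
      using wle xy by (intro mult_left_mono mult_le_one) auto
    finally show "(D x y powr p - D x y) * w x * w y \<le> \<bar>D x y powr p - D x y\<bar>" by simp
  qed
  moreover have "(\<Sum>x\<in>S. \<Sum>y\<in>S. D x y powr p * w x * w y) =
      (\<Sum>x\<in>S. \<Sum>y\<in>S. D x y * w x * w y) + (\<Sum>x\<in>S. \<Sum>y\<in>S. (D x y powr p - D x y) * w x * w y)"
    by (simp add: sum.distrib[symmetric] algebra_simps)
  ultimately have qw: "(\<Sum>x\<in>S. \<Sum>y\<in>S. D x y powr p * w x * w y) \<le> 0" using q1 pc by linarith
  have "(\<Sum>x\<in>S. \<Sum>y\<in>S. D x y powr p * v x * v y) = s^2 * (\<Sum>x\<in>S. \<Sum>y\<in>S. D x y powr p * w x * w y)"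
    unfolding w_def using sp by (simp add: sum_distrib_left power2_eq_square field_simps)
  then show ?thesis using qw by (simp add: mult_nonneg_nonpos)
qed


lemma half_sum:
  fixes G :: "nat \<Rightarrow> nat \<Rightarrow> real"
  assumes sym: "\<And>k l. G k l = G l k" and dg: "\<And>k. G k k = 0"
  shows "(\<Sum>k<m. \<Sum>l<m. G k l) = 2 * (\<Sum>k<m. \<Sum>l<m. if k < l then G k l else 0)"
proof -
  have pw: "G k l = (if k < l then G k l else 0) + (if l < k then G k l else 0)" for k l
    using dg[of k] by (cases k l rule: linorder_cases) auto
  have "(\<Sum>k<m. \<Sum>l<m. if l < k then G k l else 0) = (\<Sum>l<m. \<Sum>k<m. if l < k then G k l else 0)"
    by (rule sum.swap)
  also have "\<dots> = (\<Sum>k<m. \<Sum>l<m. if k < l then G k l else 0)"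
    by (intro sum.cong refl) (simp add: sym)
  finally have sw: "(\<Sum>k<m. \<Sum>l<m. if l < k then G k l else 0) = (\<Sum>k<m. \<Sum>l<m. if k < l then G k l else 0)" .
  have "(\<Sum>k<m. \<Sum>l<m. G k l) = (\<Sum>k<m. \<Sum>l<m. (if k < l then G k l else 0) + (if l < k then G k l else 0))"
    by (subst pw) simp
  also have "\<dots> = (\<Sum>k<m. \<Sum>l<m. if k < l then G k l else 0) + (\<Sum>k<m. \<Sum>l<m. if l < k then G k l else 0)"
    by (simp add: sum.distrib)
  finally show ?thesis using sw by simp
qed

lemma gr_exp:
  fixes S :: "'a set" and D :: "'a \<Rightarrow> 'a \<Rightarrow> real"
  assumes fin: "finite S" and sym: "\<And>x y. D x y = D y x" and dg: "\<And>x. D x x = 0"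
    and Qneg: "\<And>v. (\<Sum>x\<in>S. v x) = 0 \<Longrightarrow> (\<Sum>x\<in>S. \<Sum>y\<in>S. D x y powr p * v x * v y) \<le> 0"
  shows "gen_roundness_exponent S D p"
  unfolding gen_roundness_exponent_def
proof (intro allI impI)
  fix m :: nat and a b :: "nat \<Rightarrow> 'a"
  assume ab: "a ` {..<m} \<subseteq> S \<and> b ` {..<m} \<subseteq> S"
  define F where "F x y = D x y powr p" for x y
  define al where "al k x = (if a k = x then 1 else 0) - (if b k = x then (1::real) else 0)" for k x
  define v where "v x = (\<Sum>k<m. al k x)" for x
  have delta: "(\<Sum>x\<in>S. g x * (if z = x then 1 else 0)) = g z" if "z \<in> S" for z and g :: "'a \<Rightarrow> real"
  proof -
    have "(\<Sum>x\<in>S. g x * (if z = x then 1 else 0)) = (\<Sum>x\<in>S. if z = x then g x else 0)"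
      by (intro sum.cong) auto
    also have "\<dots> = g z" using that fin by (simp only: sum.delta') simp
    finally show ?thesis .
  qed
  have alsum: "(\<Sum>x\<in>S. g x * al k x) = g (a k) - g (b k)" if "k < m" for g k
  proof -
    have "a k \<in> S" "b k \<in> S" using ab that by auto
    then show ?thesis unfolding al_def by (simp add: right_diff_distrib sum_subtractf delta)
  qed
  have al0: "sum (al k) S = 0" if "k < m" for k using alsum[OF that, of "\<lambda>_. 1"] by simp
  have "(\<Sum>x\<in>S. v x) = (\<Sum>k<m. sum (al k) S)"
    unfolding v_def by (simp add: sum.swap[of _ S])
  also have "\<dots> = 0" using al0 by simp
  finally have Q: "(\<Sum>x\<in>S. \<Sum>y\<in>S. F x y * v x * v y) \<le> 0" using Qneg unfolding F_def by blast
  define h where "h x = (\<Sum>l<m. F x (a l) - F x (b l))" for x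
  have hy: "(\<Sum>y\<in>S. F x y * v y) = h x" for x
  proof -
    have "(\<Sum>y\<in>S. F x y * v y) = (\<Sum>l<m. \<Sum>y\<in>S. F x y * al l y)"
      unfolding v_def by (simp add: sum_distrib_left sum.swap[of _ S])
    also have "\<dots> = h x" unfolding h_def using alsum by simp
    finally show ?thesis .
  qed
  have "(\<Sum>x\<in>S. \<Sum>y\<in>S. F x y * v x * v y) = (\<Sum>x\<in>S. h x * v x)"
  proof (intro sum.cong refl)
    fix x show "(\<Sum>y\<in>S. F x y * v x * v y) = h x * v x"
    proof -
      have "(\<Sum>y\<in>S. F x y * v x * v y) = (\<Sum>y\<in>S. F x y * v y) * v x"
        unfolding sum_distrib_right by (intro sum.cong refl) (simp add: mult_ac)
      then show ?thesis using hy[of x] by simp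
    qed
  qed
  also have "\<dots> = (\<Sum>k<m. \<Sum>x\<in>S. h x * al k x)"
    unfolding v_def by (simp add: sum_distrib_left sum.swap[of _ S])
  also have "\<dots> = (\<Sum>k<m. h (a k) - h (b k))" using alsum by simp
  also have "\<dots> = (\<Sum>k<m. \<Sum>l<m. F (a k) (a l)) + (\<Sum>k<m. \<Sum>l<m. F (b k) (b l))
       - (\<Sum>k<m. \<Sum>l<m. F (a k) (b l)) - (\<Sum>k<m. \<Sum>l<m. F (b k) (a l))"
    unfolding h_def by (simp add: sum_subtractf sum.distrib)
  finally have Q2: "(\<Sum>k<m. \<Sum>l<m. F (a k) (a l)) + (\<Sum>k<m. \<Sum>l<m. F (b k) (b l))
       - (\<Sum>k<m. \<Sum>l<m. F (a k) (b l)) - (\<Sum>k<m. \<Sum>l<m. F (b k) (a l)) \<le> 0" using Q by simp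
  have Fs: "F x y = F y x" for x y unfolding F_def using sym by simp
  have Fd: "F x x = 0" for x unfolding F_def using dg by simp
  have C: "(\<Sum>k<m. \<Sum>l<m. F (b k) (a l)) = (\<Sum>k<m. \<Sum>l<m. F (a k) (b l))"
    by (subst sum.swap) (simp add: Fs)
  have A: "(\<Sum>k<m. \<Sum>l<m. F (a k) (a l)) = 2 * (\<Sum>k<m. \<Sum>l<m. if k < l then F (a k) (a l) else 0)"
    by (rule half_sum) (simp_all add: Fs Fd)
  have B: "(\<Sum>k<m. \<Sum>l<m. F (b k) (b l)) = 2 * (\<Sum>k<m. \<Sum>l<m. if k < l then F (b k) (b l) else 0)"
    by (rule half_sum) (simp_all add: Fs Fd)
  have L: "(\<Sum>k<m. \<Sum>l<m. if k < l then F (a k) (a l) + F (b k) (b l) else 0)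
     = (\<Sum>k<m. \<Sum>l<m. if k < l then F (a k) (a l) else 0) + (\<Sum>k<m. \<Sum>l<m. if k < l then F (b k) (b l) else 0)"
    by (simp add: sum.distrib[symmetric] if_distrib) (intro sum.cong refl, auto)
  show "(\<Sum>k<m. \<Sum>l<m. if k < l then D (a k) (a l) powr p + D (b k) (b l) powr p else 0)
          \<le> (\<Sum>j<m. \<Sum>i<m. D (a j) (b i) powr p)"
    using Q2 A B C L unfolding F_def by linarith
qed

lemma hd_props:
  "hamming_dist x y \<ge> 0" "hamming_dist x y = hamming_dist y x" "hamming_dist x x = 0"
  unfolding hamming_dist_def by (auto intro: sum_nonneg sum.cong simp: abs_minus_commute)

lemma exists_exp:
  fixes S :: "('n::finite \<Rightarrow> bool) set"
  assumes sn: "strict_p_negative_type S hamming_dist 1"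
  shows "\<exists>p>1. gen_roundness_exponent S hamming_dist p"
proof -
  have fin: "finite S" by simp
  have neg: "(\<Sum>x\<in>S. \<Sum>y\<in>S. hamming_dist x y * v x * v y) < 0"
    if "(\<Sum>x\<in>S. v x) = 0" "\<exists>x\<in>S. v x \<noteq> 0" for v
    using strict_sum[OF sn fin that] by (simp add: powr_one hd_props)
  obtain c where c: "c > 0" "\<forall>v. (\<Sum>x\<in>S. v x) = 0 \<and> (\<Sum>x\<in>S. \<bar>v x\<bar>) = 1 \<longrightarrow>
      (\<Sum>x\<in>S. \<Sum>y\<in>S. hamming_dist x y * v x * v y) \<le> -c"
    using unif_neg[OF neg] by blast
  obtain p where p: "p > 1" "(\<Sum>x\<in>S. \<Sum>y\<in>S. \<bar>hamming_dist x y powr p - hamming_dist x y\<bar>) < c"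
  proof -
    have "\<And>x y. hamming_dist x y \<ge> 0" by (rule hd_props)
    from choose_p[where D=hamming_dist, OF fin this c(1)] show ?thesis using that by blast
  qed
  have "gen_roundness_exponent S hamming_dist p"
    by (rule gr_exp[where D=hamming_dist, OF fin hd_props(2) hd_props(3)], rule neg_p[where D=hamming_dist, OF fin c(2) p(2)])
  then show ?thesis using p(1) by blast
qed

theorem corollary4p6:
  "\<exists>q::real. q > 1 \<and>
     (\<forall>S :: ('n::finite \<Rightarrow> bool) set.
        strict_p_negative_type S hamming_dist 1 \<longrightarrow> gen_roundness S hamming_dist \<ge> ereal q)"
proof -
  define P where "P = {S :: ('n \<Rightarrow> bool) set. strict_p_negative_type S hamming_dist 1}"
  define pk where "pk (S :: ('n \<Rightarrow> bool) set) = (SOME p. p > 1 \<and> gen_roundness_exponent S hamming_dist p)" for S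
  have pk: "pk S > 1 \<and> gen_roundness_exponent S hamming_dist (pk S)" if "S \<in> P" for S
  proof -
    have "strict_p_negative_type S hamming_dist 1" using that unfolding P_def by simp
    then have "\<exists>p. p > 1 \<and> gen_roundness_exponent S hamming_dist p" by (rule exists_exp)
    then show ?thesis unfolding pk_def by (rule someI_ex)
  qed
  define q where "q = Min (insert 2 (pk ` P))"
  have finP: "finite P" by (rule finite)
  have all1: "\<forall>a\<in>insert 2 (pk ` P). 1 < a"
  proof
    fix a assume "a \<in> insert 2 (pk ` P)"
    then have "a = 2 \<or> (\<exists>S\<in>P. a = pk S)" by blast
    then show "1 < a"
    proof
      assume "\<exists>S\<in>P. a = pk S"
      then obtain S where "S \<in> P" "a = pk S" by blast
      then show "1 < a" using pk[of S] by simp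
    qed simp
  qed
  have fin2: "finite (insert 2 (pk ` P))" using finP by simp
  have q1: "q > 1" unfolding q_def using Min_gr_iff[OF fin2] all1 by blast
  show ?thesis
  proof (intro exI conjI allI impI, rule q1)
    fix S :: "('n \<Rightarrow> bool) set" assume "strict_p_negative_type S hamming_dist 1"
    then have S: "S \<in> P" unfolding P_def by simp
    have "q \<le> pk S" unfolding q_def using fin2 S by (intro Min_le) simp_all
    then have "ereal q \<le> ereal (pk S)" by simp
    also have "\<dots> \<le> gen_roundness S hamming_dist"
    proof -
      have "pk S \<in> {p. p \<ge> 0 \<and> gen_roundness_exponent S hamming_dist p}" using pk[OF S] by simp
      then show ?thesis unfolding gen_roundness_def by (rule SUP_upper)
    qed
    finally show "ereal q \<le> gen_roundness S hamming_dist" .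
  qed
qed

end
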